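(* Let $K$ be a strictly positive definite kernel on $\Omega\subset\mathbb{R}^d$, $\lambda>0$, and $X_n=\{x_1,\dots,x_n\}\subset\Omega$ pairwise distinct. Then $P_n^\lambda(x)\le\sqrt{\lambda}$ for all $x\in X_n$, and $$P_n(x)\le P_n^\lambda(x)\le Q_n^\lambda(x)\quad\text{for all }x\in\Omega\setminus X_n .$$ In particular $\sup_{x\in\Omega}P_n^\lambda(x)\le\sup_{x\in\Omega}Q_n^\lambda(x)$.
   Context: $\mathcal{H}$ is the native space (reproducing kernel Hilbert space) of $K$ on $\Omega$. Let $\delta(x,y)=1$ if $x=y$ and $0$ otherwise, $K_\lambda(x,y):=K(x,y)+\lambda\delta(x,y)$, and $\mathcal{H}_\lambda$ the native space of $K_\lambda$. Let $A=(K(x_i,x_j))_{i,j=1}^n$. For $\mu\ge0$ and $f:\Omega\to\mathbb{R}$, $s_n^\mu(f):=\sum_j\alpha_jK(\cdot,x_j)$ with $(A+\mu I)\alpha=(f(x_i))_{i=1}^n$, and $I_n^\lambda(f):=\sum_j\alpha_jK_\lambda(\cdot,x_j)$ with $(A+\lambda I)\alpha=(f(x_i))_i$ (the interpolant of $f$ in $\mathcal{H}_\lambda$). Power functions: $P_n^\lambda(x):=\sup_{f\in\mathcal{H},f\ne0}|f(x)-s_n^\lambda(f)(x)|/\|f\|_{\mathcal{H}}$, $P_n:=P_n^0$ (power function of interpolation), and $Q_n^\lambda(x):=\sup_{f\in\mathcal{H}_\lambda,f\ne0}|f(x)-I_n^\lambda(f)(x)|/\|f\|_{\mathcal{H}_\lambda}$.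 *)

theory Defs
  imports "HOL-Analysis.Analysis"
begin

definition strictly_pd_kernel :: "('a \<Rightarrow> 'a \<Rightarrow> real) \<Rightarrow> 'a set \<Rightarrow> bool" where
  "strictly_pd_kernel K \<Omega> \<longleftrightarrow>
     (\<forall>x\<in>\<Omega>. \<forall>y\<in>\<Omega>. K x y = K y x) \<and>
     (\<forall>Y c. finite Y \<and> Y \<subseteq> \<Omega> \<and> (\<exists>y\<in>Y. c y \<noteq> 0) \<longrightarrow>
        (\<Sum>y\<in>Y. \<Sum>z\<in>Y. c y * c z * K y z) > 0)"

definition delta_kernel :: "('a \<Rightarrow> 'a \<Rightarrow> real) \<Rightarrow> real \<Rightarrow> 'a \<Rightarrow> 'a \<Rightarrow> real" where
  "delta_kernel K lam x y = K x y + lam * (if x = y then 1 else 0)"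

definition kfun :: "('a \<Rightarrow> 'a \<Rightarrow> real) \<Rightarrow> 'a set \<Rightarrow> 'a \<Rightarrow> 'a \<Rightarrow> real" where
  "kfun K \<Omega> x = (\<lambda>y. if y \<in> \<Omega> then K y x else 0)"

definition hnorm :: "(('a \<Rightarrow> real) \<Rightarrow> ('a \<Rightarrow> real) \<Rightarrow> real) \<Rightarrow> ('a \<Rightarrow> real) \<Rightarrow> real" where
  "hnorm ip f = sqrt (ip f f)"

definition is_rkhs :: "('a \<Rightarrow> 'a \<Rightarrow> real) \<Rightarrow> 'a set \<Rightarrow> ('a \<Rightarrow> real) set
    \<Rightarrow> (('a \<Rightarrow> real) \<Rightarrow> ('a \<Rightarrow> real) \<Rightarrow> real) \<Rightarrow> bool" where
  "is_rkhs K \<Omega> H ip \<longleftrightarrow>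
     (\<forall>f\<in>H. \<forall>x. x \<notin> \<Omega> \<longrightarrow> f x = 0) \<and>
     (\<lambda>_. 0) \<in> H \<and> (\<forall>f\<in>H. \<forall>g\<in>H. (\<lambda>x. f x + g x) \<in> H) \<and> (\<forall>a. \<forall>f\<in>H. (\<lambda>x. a * f x) \<in> H) \<and>
     (\<forall>f\<in>H. \<forall>g\<in>H. ip f g = ip g f) \<and>
     (\<forall>f\<in>H. \<forall>g\<in>H. \<forall>h\<in>H. ip (\<lambda>x. f x + g x) h = ip f h + ip g h) \<and>
     (\<forall>a. \<forall>f\<in>H. \<forall>g\<in>H. ip (\<lambda>x. a * f x) g = a * ip f g) \<and>
     (\<forall>f\<in>H. ip f f \<ge> 0 \<and> (ip f f = 0 \<longrightarrow> f = (\<lambda>_. 0))) \<and>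
     (\<forall>F. (\<forall>k. F k \<in> H) \<and>
          (\<forall>e>0. \<exists>N. \<forall>m\<ge>N. \<forall>k\<ge>N. hnorm ip (\<lambda>x. F m x - F k x) < e) \<longrightarrow>
          (\<exists>g\<in>H. (\<lambda>k. hnorm ip (\<lambda>x. F k x - g x)) \<longlonglongrightarrow> 0)) \<and>
     (\<forall>x\<in>\<Omega>. kfun K \<Omega> x \<in> H) \<and>
     (\<forall>f\<in>H. \<forall>x\<in>\<Omega>. ip f (kfun K \<Omega> x) = f x)"

definition kcoef :: "('a \<Rightarrow> 'a \<Rightarrow> real) \<Rightarrow> 'a list \<Rightarrow> ('a \<Rightarrow> real) \<Rightarrow> nat \<Rightarrow> real" where
  "kcoef k xs f = (THE \<alpha>. (\<forall>i<length xs. (\<Sum>j<length xs. k (xs!i) (xs!j) * \<alpha> j) = f (xs!i))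
                       \<and> (\<forall>j\<ge>length xs. \<alpha> j = 0))"

text \<open>s_n^mu(f) = sum_j alpha_j K(.,x_j) with (A + mu I) alpha = f|X.
  Since the x_i are pairwise distinct, A + mu I is the kernel matrix of K_mu.\<close>
definition reg_interp :: "('a \<Rightarrow> 'a \<Rightarrow> real) \<Rightarrow> 'a list \<Rightarrow> real \<Rightarrow> ('a \<Rightarrow> real) \<Rightarrow> 'a \<Rightarrow> real" where
  "reg_interp K xs \<mu> f = (\<lambda>x. \<Sum>j<length xs. kcoef (delta_kernel K \<mu>) xs f j * K x (xs!j))"

definition delta_interp :: "('a \<Rightarrow> 'a \<Rightarrow> real) \<Rightarrow> 'a list \<Rightarrow> real \<Rightarrow> ('a \<Rightarrow> real) \<Rightarrow> 'a \<Rightarrow> real" where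
  "delta_interp K xs lam f = (\<lambda>x. \<Sum>j<length xs. kcoef (delta_kernel K lam) xs f j * delta_kernel K lam x (xs!j))"

definition power_fun :: "('a \<Rightarrow> 'a \<Rightarrow> real) \<Rightarrow> ('a \<Rightarrow> real) set
    \<Rightarrow> (('a \<Rightarrow> real) \<Rightarrow> ('a \<Rightarrow> real) \<Rightarrow> real) \<Rightarrow> 'a list \<Rightarrow> real \<Rightarrow> 'a \<Rightarrow> real" where
  "power_fun K H ip xs \<mu> x =
     (SUP f\<in>{f\<in>H. f \<noteq> (\<lambda>_. 0)}. \<bar>f x - reg_interp K xs \<mu> f x\<bar> / hnorm ip f)"

definition power_fun_delta :: "('a \<Rightarrow> 'a \<Rightarrow> real) \<Rightarrow> ('a \<Rightarrow> real) set
    \<Rightarrow> (('a \<Rightarrow> real) \<Rightarrow> ('a \<Rightarrow> real) \<Rightarrow> real) \<Rightarrow> 'a list \<Rightarrow> real \<Rightarrow> 'a \<Rightarrow> real" where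
  "power_fun_delta K Hl ipl xs lam x =
     (SUP f\<in>{f\<in>Hl. f \<noteq> (\<lambda>_. 0)}. \<bar>f x - delta_interp K xs lam f x\<bar> / hnorm ipl f)"

end

theory Submission imports Defs "Jordan_Normal_Form.Determinant" begin

lemma solve_exists:
  fixes M :: "nat \<Rightarrow> nat \<Rightarrow> real"
  assumes inj: "\<And>c. (\<forall>i<n. (\<Sum>j<n. M i j * c j) = 0) \<Longrightarrow> \<forall>j<n. c j = 0"
  shows "\<exists>\<alpha>. \<forall>i<n. (\<Sum>j<n. M i j * \<alpha> j) = y i"
proof -
  define A where "A = mat n n (\<lambda>(i,j). M i j)"
  have A: "A \<in> carrier_mat n n" unfolding A_def by simp
  have "det A \<noteq> 0"
  proof
    assume "det A = 0"
    then obtain v where v: "v \<in> carrier_vec n" "v \<noteq> 0\<^sub>v n" "A *\<^sub>v v = 0\<^sub>v n"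
      using det_0_iff_vec_prod_zero[OF A] by auto
    have "\<forall>i<n. (\<Sum>j<n. M i j * vec_index v j) = 0"
    proof (intro allI impI)
      fix i assume i: "i < n"
      have "vec_index (A *\<^sub>v v) i = 0" using v(3) i by simp
      then show "(\<Sum>j<n. M i j * vec_index v j) = 0"
        using i v(1) A by (simp add: A_def scalar_prod_def row_def lessThan_atLeast0)
    qed
    from inj[OF this] have "v = 0\<^sub>v n" using v(1) by (intro eq_vecI) auto
    with v(2) show False by simp
  qed
  from det_non_zero_imp_unit[OF A this, of "()"]
  obtain B where B: "B \<in> carrier_mat n n" and AB: "A * B = 1\<^sub>m n"
    unfolding Units_def ring_mat_def by auto
  define w where "w = vec n y"
  define a where "a = B *\<^sub>v w"
  have "A *\<^sub>v a = w" unfolding a_def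
    using A B AB by (metis assoc_mult_mat_vec one_mult_mat_vec vec_carrier w_def)
  show ?thesis
  proof (intro exI allI impI)
    fix i assume i: "i < n"
    have "vec_index (A *\<^sub>v a) i = y i" using \<open>A *\<^sub>v a = w\<close> i by (simp add: w_def)
    moreover have "dim_vec a = n" using B by (simp add: a_def)
    ultimately show "(\<Sum>j<n. M i j * vec_index a j) = y i"
      using i by (simp add: A_def scalar_prod_def row_def lessThan_atLeast0)
  qed
qed


lemma kcoef_props:
  fixes m :: "'a \<Rightarrow> 'a \<Rightarrow> real"
  assumes inj: "\<And>c. (\<forall>i<length xs. (\<Sum>j<length xs. m (xs!i) (xs!j) * c j) = 0) \<Longrightarrow> \<forall>j<length xs. c j = 0"
  shows "(\<forall>i<length xs. (\<Sum>j<length xs. m (xs!i) (xs!j) * kcoef m xs f j) = f (xs!i))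
         \<and> (\<forall>j\<ge>length xs. kcoef m xs f j = 0)"
proof -
  let ?n = "length xs"
  let ?P = "\<lambda>\<alpha>. (\<forall>i<?n. (\<Sum>j<?n. m (xs!i) (xs!j) * \<alpha> j) = f (xs!i)) \<and> (\<forall>j\<ge>?n. \<alpha> j = 0)"
  obtain a where a: "\<forall>i<?n. (\<Sum>j<?n. m (xs!i) (xs!j) * a j) = f (xs!i)"
    using solve_exists[of ?n "\<lambda>i j. m (xs!i) (xs!j)" "\<lambda>i. f (xs!i)", OF inj] by blast
  define a' where "a' = (\<lambda>j. if j < ?n then a j else 0)"
  have "?P a'" using a by (simp add: a'_def)
  moreover have "\<beta> = a'" if "?P \<beta>" for \<beta>
  proof -
    have "\<forall>i<?n. (\<Sum>j<?n. m (xs!i) (xs!j) * (\<beta> j - a' j)) = 0"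
      using that \<open>?P a'\<close> by (simp add: right_diff_distrib sum_subtractf)
    from inj[OF this] have "\<forall>j<?n. \<beta> j = a' j" by simp
    with that \<open>?P a'\<close> show ?thesis by (intro ext) (metis not_less)
  qed
  ultimately have "?P (THE \<alpha>. ?P \<alpha>)" by (rule theI)
  then show ?thesis unfolding kcoef_def .
qed


lemma kcoef_cong:
  assumes "\<forall>i<length xs. f (xs!i) = g (xs!i)"
  shows "kcoef m xs f = kcoef m xs g"
proof -
  have "\<And>\<alpha>. ((\<forall>i<length xs. (\<Sum>j<length xs. m (xs!i) (xs!j) * \<alpha> j) = f (xs!i)) \<and> (\<forall>j\<ge>length xs. \<alpha> j = 0))
     = ((\<forall>i<length xs. (\<Sum>j<length xs. m (xs!i) (xs!j) * \<alpha> j) = g (xs!i)) \<and> (\<forall>j\<ge>length xs. \<alpha> j = 0))"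
    using assms by auto
  then show ?thesis unfolding kcoef_def by simp
qed

lemma sum_list_index:
  assumes "distinct xs"
  shows "(\<Sum>y\<in>set xs. h y) = (\<Sum>i<length xs. h (xs!i))"
proof -
  have "set xs = (\<lambda>i. xs!i) ` {..<length xs}" by (auto simp: in_set_conv_nth image_def)
  moreover have "inj_on (\<lambda>i. xs!i) {..<length xs}" using assms by (simp add: inj_on_def nth_eq_iff_index_eq)
  ultimately show ?thesis by (simp add: sum.reindex)
qed

lemma pd_index:
  assumes spd: "strictly_pd_kernel K \<Omega>" and d: "distinct xs" and sub: "set xs \<subseteq> \<Omega>"
    and nz: "\<exists>i<length xs. c i \<noteq> 0"
  shows "(\<Sum>i<length xs. \<Sum>j<length xs. c i * c j * K (xs!i) (xs!j)) > 0"
proof -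
  let ?n = "length xs"
  define c' where "c' = (\<lambda>y. c (inv_into {..<?n} (\<lambda>i. xs!i) y))"
  have inj: "inj_on (\<lambda>i. xs!i) {..<?n}" using d by (simp add: inj_on_def nth_eq_iff_index_eq)
  have c': "c' (xs!i) = c i" if "i < ?n" for i
    unfolding c'_def using inv_into_f_f[OF inj] that by simp
  from nz obtain i where i: "i < ?n" "c i \<noteq> 0" by auto
  have "\<exists>y\<in>set xs. c' y \<noteq> 0" using i c' by (metis nth_mem)
  then have "(\<Sum>y\<in>set xs. \<Sum>z\<in>set xs. c' y * c' z * K y z) > 0"
  proof -
    have "\<forall>Y c. finite Y \<and> Y \<subseteq> \<Omega> \<and> (\<exists>y\<in>Y. c y \<noteq> 0) \<longrightarrow>
        (\<Sum>y\<in>Y. \<Sum>z\<in>Y. c y * c z * K y z) > 0" using spd unfolding strictly_pd_kernel_def by (rule conjunct2)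
    then show ?thesis using sub \<open>\<exists>y\<in>set xs. c' y \<noteq> 0\<close> by (meson finite_set)
  qed
  also have "(\<Sum>y\<in>set xs. \<Sum>z\<in>set xs. c' y * c' z * K y z) = (\<Sum>i<?n. \<Sum>j<?n. c i * c j * K (xs!i) (xs!j))"
    using d unfolding sum_list_index[OF d] by (intro sum.cong refl) (simp add: c')
  finally show ?thesis .
qed

lemma psd_index:
  assumes spd: "strictly_pd_kernel K \<Omega>" and d: "distinct xs" and sub: "set xs \<subseteq> \<Omega>"
  shows "(\<Sum>i<length xs. \<Sum>j<length xs. c i * c j * K (xs!i) (xs!j)) \<ge> 0"
proof (cases "\<exists>i<length xs. c i \<noteq> 0")
  case True then show ?thesis using pd_index[OF assms True] by linarith
next
  case False then show ?thesis by simp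
qed


lemma delta_sum:
  assumes d: "distinct xs"
  shows "(\<Sum>i<length xs. \<Sum>j<length xs. c i * c j * delta_kernel K mu (xs!i) (xs!j))
    = (\<Sum>i<length xs. \<Sum>j<length xs. c i * c j * K (xs!i) (xs!j)) + mu * (\<Sum>i<length xs. c i ^ 2)"
proof -
  have "(\<Sum>i<length xs. \<Sum>j<length xs. c i * c j * delta_kernel K mu (xs!i) (xs!j))
     = (\<Sum>i<length xs. (\<Sum>j<length xs. c i * c j * K (xs!i) (xs!j)) + mu * c i ^ 2)"
  proof (rule sum.cong[OF refl])
    fix i assume i: "i \<in> {..<length xs}"
    have "(\<Sum>j<length xs. c i * c j * delta_kernel K mu (xs!i) (xs!j))
      = (\<Sum>j<length xs. c i * c j * K (xs!i) (xs!j)) + (\<Sum>j<length xs. if i = j then mu * c i ^ 2 else 0)"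
      unfolding delta_kernel_def sum.distrib[symmetric]
      using i d by (intro sum.cong refl) (auto simp: nth_eq_iff_index_eq power2_eq_square algebra_simps)
    also have "(\<Sum>j<length xs. if i = j then mu * c i ^ 2 else 0) = mu * c i ^ 2" using i by simp
    finally show "(\<Sum>j<length xs. c i * c j * delta_kernel K mu (xs!i) (xs!j))
      = (\<Sum>j<length xs. c i * c j * K (xs!i) (xs!j)) + mu * c i ^ 2" .
  qed
  also have "\<dots> = (\<Sum>i<length xs. \<Sum>j<length xs. c i * c j * K (xs!i) (xs!j)) + mu * (\<Sum>i<length xs. c i ^ 2)"
    by (simp add: sum.distrib sum_distrib_left)
  finally show ?thesis .
qed

lemma delta_inj:
  assumes spd: "strictly_pd_kernel K \<Omega>" and d: "distinct xs" and sub: "set xs \<subseteq> \<Omega>" and mu: "mu \<ge> 0"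
  shows "\<And>c. (\<forall>i<length xs. (\<Sum>j<length xs. delta_kernel K mu (xs!i) (xs!j) * c j) = 0) \<Longrightarrow> \<forall>j<length xs. c j = 0"
proof (rule ccontr)
  fix c assume h: "\<forall>i<length xs. (\<Sum>j<length xs. delta_kernel K mu (xs!i) (xs!j) * c j) = 0"
    and nz: "\<not> (\<forall>j<length xs. c j = 0)"
  have "(\<Sum>i<length xs. \<Sum>j<length xs. c i * c j * delta_kernel K mu (xs!i) (xs!j))
     = (\<Sum>i<length xs. c i * (\<Sum>j<length xs. delta_kernel K mu (xs!i) (xs!j) * c j))"
    by (simp add: sum_distrib_left algebra_simps)
  also have "\<dots> = 0" using h by simp
  finally have z: "(\<Sum>i<length xs. \<Sum>j<length xs. c i * c j * delta_kernel K mu (xs!i) (xs!j)) = 0" .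
  have "(\<Sum>i<length xs. \<Sum>j<length xs. c i * c j * K (xs!i) (xs!j)) > 0"
    using pd_index[OF spd d sub] nz by blast
  moreover have "mu * (\<Sum>i<length xs. c i ^ 2) \<ge> 0" using mu by (simp add: sum_nonneg)
  ultimately show False using z delta_sum[OF d, of c K mu] by linarith
qed


lemma rk:
  assumes "is_rkhs k \<Omega> H ip"
  shows rk_add: "\<And>f g. f\<in>H \<Longrightarrow> g\<in>H \<Longrightarrow> (\<lambda>x. f x + g x) \<in> H"
    and rk_scale: "\<And>f a. f\<in>H \<Longrightarrow> (\<lambda>x. a * f x) \<in> H"
    and rk_zero: "(\<lambda>_. 0) \<in> H"
    and rk_sym: "\<And>f g. f\<in>H \<Longrightarrow> g\<in>H \<Longrightarrow> ip f g = ip g f"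
    and rk_addl: "\<And>f g h. f\<in>H \<Longrightarrow> g\<in>H \<Longrightarrow> h\<in>H \<Longrightarrow> ip (\<lambda>x. f x + g x) h = ip f h + ip g h"
    and rk_scalel: "\<And>f g a. f\<in>H \<Longrightarrow> g\<in>H \<Longrightarrow> ip (\<lambda>x. a * f x) g = a * ip f g"
    and rk_pos: "\<And>f. f\<in>H \<Longrightarrow> ip f f \<ge> 0"
    and rk_def: "\<And>f. f\<in>H \<Longrightarrow> ip f f = 0 \<Longrightarrow> f = (\<lambda>_. 0)"
    and rk_kfun: "\<And>x. x\<in>\<Omega> \<Longrightarrow> kfun k \<Omega> x \<in> H"
    and rk_repr: "\<And>f x. f\<in>H \<Longrightarrow> x\<in>\<Omega> \<Longrightarrow> ip f (kfun k \<Omega> x) = f x"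
  using assms unfolding is_rkhs_def by auto

lemma rk_zero_right:
  assumes R: "is_rkhs k \<Omega> H ip" and f: "f \<in> H"
  shows "ip f (\<lambda>_. 0) = 0"
proof -
  have "ip f (\<lambda>_. 0) = ip (\<lambda>_. 0) f" using rk_sym[OF R f rk_zero[OF R]] .
  also have "\<dots> = ip (\<lambda>x. 0 * f x) f" by simp
  also have "\<dots> = 0" using rk_scalel[OF R f f, of 0] by simp
  finally show ?thesis .
qed

lemma rk_addr:
  assumes R: "is_rkhs k \<Omega> H ip" and "f\<in>H" "g\<in>H" "h\<in>H"
  shows "ip h (\<lambda>x. f x + g x) = ip h f + ip h g"
proof -
  have "ip h (\<lambda>x. f x + g x) = ip (\<lambda>x. f x + g x) h" using rk_sym[OF R assms(4) rk_add[OF R assms(2,3)]] .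
  also have "\<dots> = ip f h + ip g h" using rk_addl[OF R assms(2-4)] .
  finally show ?thesis using rk_sym[OF R assms(2,4)] rk_sym[OF R assms(3,4)] by simp
qed

lemma rk_scaler:
  assumes R: "is_rkhs k \<Omega> H ip" and "f\<in>H" "g\<in>H"
  shows "ip g (\<lambda>x. a * f x) = a * ip g f"
proof -
  have "ip g (\<lambda>x. a * f x) = ip (\<lambda>x. a * f x) g" using rk_sym[OF R assms(3) rk_scale[OF R assms(2)]] .
  also have "\<dots> = a * ip f g" using rk_scalel[OF R assms(2,3)] .
  finally show ?thesis using rk_sym[OF R assms(2,3)] by simp
qed

lemma rk_sum:
  fixes N :: nat
  assumes R: "is_rkhs k \<Omega> H ip" and h: "\<And>i. i < N \<Longrightarrow> h i \<in> H"
  shows "(\<lambda>y. \<Sum>i<N. c i * h i y) \<in> H \<and> (\<forall>f\<in>H. ip f (\<lambda>y. \<Sum>i<N. c i * h i y) = (\<Sum>i<N. c i * ip f (h i)))"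
  using h
proof (induction N)
  case 0
  then show ?case using rk_zero[OF R] rk_zero_right[OF R] by simp
next
  case (Suc N)
  let ?S = "\<lambda>y. \<Sum>i<N. c i * h i y"
  have IH: "?S \<in> H" "\<forall>f\<in>H. ip f ?S = (\<Sum>i<N. c i * ip f (h i))" using Suc by auto
  have hN: "h N \<in> H" using Suc by auto
  have sc: "(\<lambda>y. c N * h N y) \<in> H" using rk_scale[OF R hN] .
  have eq: "(\<lambda>y. \<Sum>i<Suc N. c i * h i y) = (\<lambda>y. ?S y + c N * h N y)" by simp
  show ?case unfolding eq
  proof
    show "(\<lambda>y. ?S y + c N * h N y) \<in> H" using rk_add[OF R IH(1) sc] .
    show "\<forall>f\<in>H. ip f (\<lambda>y. ?S y + c N * h N y) = (\<Sum>i<Suc N. c i * ip f (h i))"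
    proof
      fix f assume f: "f \<in> H"
      have "ip f (\<lambda>y. ?S y + c N * h N y) = ip f ?S + ip f (\<lambda>y. c N * h N y)"
        using rk_addr[OF R IH(1) sc f] .
      also have "ip f (\<lambda>y. c N * h N y) = c N * ip f (h N)" using rk_scaler[OF R hN f] .
      finally show "ip f (\<lambda>y. ?S y + c N * h N y) = (\<Sum>i<Suc N. c i * ip f (h i))"
        using IH(2) f by simp
    qed
  qed
qed


lemma rk_cs:
  assumes R: "is_rkhs k \<Omega> H ip" and f: "f \<in> H" and g: "g \<in> H"
  shows "\<bar>ip f g\<bar> \<le> hnorm ip f * hnorm ip g"
proof (cases "ip g g = 0")
  case True
  then have "g = (\<lambda>_. 0)" using rk_def[OF R g] by simp
  then have "ip f g = 0" using rk_zero_right[OF R f] by simp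
  then show ?thesis unfolding hnorm_def using rk_pos[OF R f] rk_pos[OF R g] by simp
next
  case False
  have gg: "ip g g > 0" using False rk_pos[OF R g] by simp
  define t where "t = ip f g / ip g g"
  have sg: "(\<lambda>x. (-t) * g x) \<in> H" using rk_scale[OF R g] .
  define h where "h = (\<lambda>x. f x + (-t) * g x)"
  have hH: "h \<in> H" unfolding h_def using rk_add[OF R f sg] .
  have e1: "ip h h = ip f h + ip (\<lambda>x. (-t) * g x) h"
    using rk_addl[OF R f sg hH] by (simp only: h_def)
  have e2: "ip (\<lambda>x. (-t) * g x) h = (-t) * ip g h" using rk_scalel[OF R g hH] .
  have e3: "ip f h = ip f f + ip f (\<lambda>x. (-t) * g x)"
    using rk_addr[OF R f sg f] by (simp only: h_def)
  have e4: "ip g h = ip g f + ip g (\<lambda>x. (-t) * g x)"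
    using rk_addr[OF R f sg g] by (simp only: h_def)
  have e5: "ip f (\<lambda>x. (-t) * g x) = (-t) * ip f g" using rk_scaler[OF R g f] .
  have e6: "ip g (\<lambda>x. (-t) * g x) = (-t) * ip g g" using rk_scaler[OF R g g] .
  have "ip h h = ip f f + (-t) * ip f g + (-t) * (ip g f + (-t) * ip g g)"
    using e1 e2 e3 e4 e5 e6 by simp
  then have "ip h h = ip f f - 2 * t * ip f g + t^2 * ip g g"
    using rk_sym[OF R f g] by (simp add: algebra_simps power2_eq_square)
  also have "\<dots> = ip f f - (ip f g)^2 / ip g g"
    unfolding t_def using gg by (simp add: field_simps power2_eq_square)
  finally have "0 \<le> ip f f - (ip f g)^2 / ip g g" using rk_pos[OF R hH] by simp
  then have "(ip f g)^2 \<le> ip f f * ip g g" using gg by (simp add: field_simps)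
  then have "sqrt ((ip f g)^2) \<le> sqrt (ip f f * ip g g)" by (rule real_sqrt_le_mono)
  then show ?thesis unfolding hnorm_def by (simp add: real_sqrt_mult)
qed

lemma rk_sup:
  assumes R: "is_rkhs k \<Omega> H ip" and g: "g \<in> H" and nz: "\<exists>f\<in>H. f \<noteq> (\<lambda>_. 0)"
  shows "(SUP f\<in>{f\<in>H. f \<noteq> (\<lambda>_. 0)}. \<bar>ip f g\<bar> / hnorm ip f) = hnorm ip g"
proof -
  let ?S = "{f\<in>H. f \<noteq> (\<lambda>_. 0)}"
  have ne: "?S \<noteq> {}" using nz by auto
  have pos: "hnorm ip f > 0" if "f \<in> ?S" for f
  proof -
    have "ip f f \<noteq> 0" using that rk_def[OF R] by auto
    then have "ip f f > 0" using rk_pos[OF R] that by force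
    then show ?thesis unfolding hnorm_def by simp
  qed
  have ub: "\<bar>ip f g\<bar> / hnorm ip f \<le> hnorm ip g" if "f \<in> ?S" for f
    using rk_cs[OF R _ g, of f] pos[OF that] that by (simp add: divide_le_eq mult.commute)
  show ?thesis
  proof (cases "g = (\<lambda>_. 0)")
    case True
    have "hnorm ip g = 0" using True rk_zero_right[OF R g] by (simp add: hnorm_def)
    moreover have "(SUP f\<in>?S. \<bar>ip f g\<bar> / hnorm ip f) = (SUP f\<in>?S. 0)"
      using True rk_zero_right[OF R] by (intro SUP_cong) auto
    ultimately show ?thesis using ne by simp
  next
    case False
    then have gS: "g \<in> ?S" using g by simp
    have "\<bar>ip g g\<bar> / hnorm ip g = hnorm ip g"
      using pos[OF gS] rk_pos[OF R g] unfolding hnorm_def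
      by (metis abs_of_nonneg real_div_sqrt)
    then have "hnorm ip g \<le> (SUP f\<in>?S. \<bar>ip f g\<bar> / hnorm ip f)"
      using ub gS by (metis (no_types, lifting) bdd_aboveI2 cSUP_upper)
    moreover have "(SUP f\<in>?S. \<bar>ip f g\<bar> / hnorm ip f) \<le> hnorm ip g"
      using ne ub by (rule cSUP_least)
    ultimately show ?thesis by simp
  qed
qed


lemma power_general:
  fixes k m :: "'a \<Rightarrow> 'a \<Rightarrow> real"
  assumes R: "is_rkhs k \<Omega> H ip" and symk: "\<forall>a\<in>\<Omega>. \<forall>b\<in>\<Omega>. k a b = k b a"
    and sub: "set xs \<subseteq> \<Omega>" and x: "x \<in> \<Omega>"
    and msym: "\<forall>i<length xs. \<forall>j<length xs. m (xs!i) (xs!j) = m (xs!j) (xs!i)"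
    and minj: "\<And>c. (\<forall>i<length xs. (\<Sum>j<length xs. m (xs!i) (xs!j) * c j) = 0) \<Longrightarrow> \<forall>j<length xs. c j = 0"
    and nz: "\<exists>f\<in>H. f \<noteq> (\<lambda>_. 0)"
  shows "(SUP f\<in>{f\<in>H. f \<noteq> (\<lambda>_. 0)}. \<bar>f x - (\<Sum>j<length xs. kcoef m xs f j * k x (xs!j))\<bar> / hnorm ip f)
    = sqrt (k x x - 2 * (\<Sum>i<length xs. kcoef m xs (\<lambda>y. k x y) i * k x (xs!i))
        + (\<Sum>i<length xs. \<Sum>j<length xs. kcoef m xs (\<lambda>y. k x y) i * kcoef m xs (\<lambda>y. k x y) j * k (xs!i) (xs!j)))
    \<and> 0 \<le> k x x - 2 * (\<Sum>i<length xs. kcoef m xs (\<lambda>y. k x y) i * k x (xs!i))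
        + (\<Sum>i<length xs. \<Sum>j<length xs. kcoef m xs (\<lambda>y. k x y) i * kcoef m xs (\<lambda>y. k x y) j * k (xs!i) (xs!j))"
proof -
  let ?n = "length xs"
  define u where "u = kcoef m xs (\<lambda>y. k x y)"
  have u: "\<forall>i<?n. (\<Sum>j<?n. m (xs!i) (xs!j) * u j) = k x (xs!i)"
    using kcoef_props[OF minj] unfolding u_def by blast
  have xi: "xs!i \<in> \<Omega>" if "i < ?n" for i using sub that by auto
  have interp: "(\<Sum>j<?n. kcoef m xs f j * k x (xs!j)) = (\<Sum>i<?n. u i * f (xs!i))" for f
  proof -
    define a where "a = kcoef m xs f"
    have a: "\<forall>i<?n. (\<Sum>j<?n. m (xs!i) (xs!j) * a j) = f (xs!i)"
      using kcoef_props[OF minj] unfolding a_def by blast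
    have "(\<Sum>j<?n. a j * k x (xs!j)) = (\<Sum>j<?n. a j * (\<Sum>i<?n. m (xs!j) (xs!i) * u i))"
      using u by simp
    also have "\<dots> = (\<Sum>j<?n. \<Sum>i<?n. u i * (m (xs!i) (xs!j) * a j))"
      using msym by (intro sum.cong refl) (auto simp: sum_distrib_left algebra_simps)
    also have "\<dots> = (\<Sum>i<?n. \<Sum>j<?n. u i * (m (xs!i) (xs!j) * a j))"
      by (rule sum.swap)
    also have "\<dots> = (\<Sum>i<?n. u i * f (xs!i))"
      using a by (simp add: sum_distrib_left[symmetric])
    finally show ?thesis unfolding a_def .
  qed
  have kx: "kfun k \<Omega> x \<in> H" using rk_kfun[OF R x] .
  have S: "(\<lambda>y. \<Sum>i<?n. u i * kfun k \<Omega> (xs!i) y) \<in> H \<and>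
     (\<forall>f\<in>H. ip f (\<lambda>y. \<Sum>i<?n. u i * kfun k \<Omega> (xs!i) y) = (\<Sum>i<?n. u i * ip f (kfun k \<Omega> (xs!i))))"
    using rk_sum[OF R, of ?n "\<lambda>i. kfun k \<Omega> (xs!i)" u] rk_kfun[OF R] xi by blast
  define s where "s = (\<lambda>y. \<Sum>i<?n. u i * kfun k \<Omega> (xs!i) y)"
  have sH: "s \<in> H" using S unfolding s_def by blast
  have ms: "(\<lambda>y. (-1) * s y) \<in> H" using rk_scale[OF R sH] .
  define g where "g = (\<lambda>y. kfun k \<Omega> x y + (-1) * s y)"
  have gH: "g \<in> H" unfolding g_def using rk_add[OF R kx ms] .
  have ipg: "ip f g = f x - (\<Sum>i<?n. u i * f (xs!i))" if f: "f \<in> H" for f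
  proof -
    have "ip f g = ip f (kfun k \<Omega> x) + ip f (\<lambda>y. (-1) * s y)"
      unfolding g_def using rk_addr[OF R kx ms f] .
    also have "ip f (\<lambda>y. (-1) * s y) = (-1) * ip f s" using rk_scaler[OF R sH f] .
    also have "ip f s = (\<Sum>i<?n. u i * f (xs!i))"
      using S f rk_repr[OF R f] xi unfolding s_def by simp
    finally show ?thesis using rk_repr[OF R f x] by simp
  qed
  have "(SUP f\<in>{f\<in>H. f \<noteq> (\<lambda>_. 0)}. \<bar>f x - (\<Sum>j<length xs. kcoef m xs f j * k x (xs!j))\<bar> / hnorm ip f)
      = (SUP f\<in>{f\<in>H. f \<noteq> (\<lambda>_. 0)}. \<bar>ip f g\<bar> / hnorm ip f)"
    using ipg interp by (intro SUP_cong) auto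
  also have "\<dots> = hnorm ip g" using rk_sup[OF R gH nz] .
  moreover have gg: "ip g g = k x x - 2 * (\<Sum>i<?n. u i * k x (xs!i)) + (\<Sum>i<?n. \<Sum>j<?n. u i * u j * k (xs!i) (xs!j))"
  proof -
    have gy: "g y = k y x - (\<Sum>j<?n. u j * k y (xs!j))" if "y \<in> \<Omega>" for y
      using that xi unfolding g_def s_def kfun_def by simp
    have "ip g g = g x - (\<Sum>i<?n. u i * g (xs!i))" using ipg[OF gH] .
    also have "(\<Sum>i<?n. u i * g (xs!i)) = (\<Sum>i<?n. u i * k x (xs!i) - (\<Sum>j<?n. u i * u j * k (xs!i) (xs!j)))"
      using gy xi symk x by (intro sum.cong refl) (auto simp: right_diff_distrib sum_distrib_left mult.assoc)
    finally show ?thesis using gy[OF x] by (simp add: sum_subtractf)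
  qed
  moreover have "ip g g \<ge> 0" using rk_pos[OF R gH] .
  ultimately show ?thesis unfolding hnorm_def u_def by simp
qed


lemma bil: "(\<Sum>i<n. \<Sum>j<n. a i * b j * A i j) = (\<Sum>i<n. a i * (\<Sum>j<n. A i j * b j))"
  for A :: "nat \<Rightarrow> nat \<Rightarrow> real"
  by (simp add: sum_distrib_left algebra_simps)

lemma scal_X:
  fixes A :: "nat \<Rightarrow> nat \<Rightarrow> real"
  assumes hu: "\<forall>i<n. (\<Sum>j<n. A i j * u j) + lam * u i = A p i" and p: "p < n" and lam: "lam > 0"
  shows "A p p - 2 * (\<Sum>i<n. u i * A p i) + (\<Sum>i<n. \<Sum>j<n. u i * u j * A i j) \<le> lam"
proof -
  have q: "(\<Sum>i<n. \<Sum>j<n. u i * u j * A i j) = (\<Sum>i<n. u i * A p i) - lam * (\<Sum>i<n. u i ^ 2)"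
  proof -
    have "(\<Sum>i<n. \<Sum>j<n. u i * u j * A i j) = (\<Sum>i<n. u i * (A p i - lam * u i))"
    proof -
      have hu': "\<forall>i<n. (\<Sum>j<n. A i j * u j) = A p i - lam * u i" using hu by (simp add: eq_diff_eq)
      show ?thesis unfolding bil using hu' by (intro sum.cong refl) simp
    qed
    then show ?thesis by (simp add: algebra_simps sum_subtractf sum_distrib_left power2_eq_square)
  qed
  have l: "(\<Sum>i<n. u i * A p i) = A p p - lam * u p"
    using hu p by (simp add: algebra_simps)
  have s: "u p ^ 2 \<le> (\<Sum>i<n. u i ^ 2)"
    using p by (intro member_le_sum) auto
  have "0 \<le> (u p - 1/2)^2" by simp
  then have "u p - u p ^ 2 \<le> 1" by (simp add: power2_eq_square algebra_simps)
  have "A p p - 2 * (\<Sum>i<n. u i * A p i) + (\<Sum>i<n. \<Sum>j<n. u i * u j * A i j)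
     = lam * (u p - (\<Sum>i<n. u i ^ 2))" unfolding q l by (simp add: algebra_simps)
  also have "\<dots> \<le> lam * (u p - u p ^ 2)" using s lam by (intro mult_left_mono) auto
  also have "\<dots> \<le> lam * 1" using \<open>u p - u p ^ 2 \<le> 1\<close> lam by (intro mult_left_mono) auto
  finally show ?thesis by simp
qed

lemma scal_out:
  fixes A :: "nat \<Rightarrow> nat \<Rightarrow> real"
  assumes sym: "\<forall>i<n. \<forall>j<n. A i j = A j i"
    and psd: "\<And>c. (\<Sum>i<n. \<Sum>j<n. c i * c j * A i j) \<ge> 0"
    and hv: "\<forall>i<n. (\<Sum>j<n. A i j * v j) = b i"
  shows "kxx - 2 * (\<Sum>i<n. v i * b i) + (\<Sum>i<n. \<Sum>j<n. v i * v j * A i j)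
       \<le> kxx - 2 * (\<Sum>i<n. u i * b i) + (\<Sum>i<n. \<Sum>j<n. u i * u j * A i j)"
proof -
  have vv: "(\<Sum>i<n. \<Sum>j<n. v i * v j * A i j) = (\<Sum>i<n. v i * b i)"
    unfolding bil using hv by simp
  have uv: "(\<Sum>i<n. \<Sum>j<n. u i * v j * A i j) = (\<Sum>i<n. u i * b i)"
    unfolding bil using hv by simp
  have vu: "(\<Sum>i<n. \<Sum>j<n. v i * u j * A i j) = (\<Sum>i<n. \<Sum>j<n. u i * v j * A i j)"
  proof -
    have "(\<Sum>i<n. \<Sum>j<n. v i * u j * A i j) = (\<Sum>j<n. \<Sum>i<n. v i * u j * A i j)" by (rule sum.swap)
    also have "\<dots> = (\<Sum>j<n. \<Sum>i<n. u j * v i * A j i)"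
      using sym by (intro sum.cong refl) (simp add: algebra_simps)
    finally show ?thesis .
  qed
  have "(\<Sum>i<n. \<Sum>j<n. (u i - v i) * (u j - v j) * A i j)
      = (\<Sum>i<n. \<Sum>j<n. u i * u j * A i j) - (\<Sum>i<n. \<Sum>j<n. u i * v j * A i j)
        - (\<Sum>i<n. \<Sum>j<n. v i * u j * A i j) + (\<Sum>i<n. \<Sum>j<n. v i * v j * A i j)"
    by (simp add: algebra_simps sum.distrib sum_subtractf)
  moreover have "(\<Sum>i<n. \<Sum>j<n. (u i - v i) * (u j - v j) * A i j) \<ge> 0" by (rule psd)
  ultimately show ?thesis using vv uv vu by linarith
qed


theorem proposition3p2:
  fixes K :: "real^'d \<Rightarrow> real^'d \<Rightarrow> real"
    and \<Omega> :: "(real^'d) set"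
    and lam :: real
    and xs :: "(real^'d) list"
    and H :: "(real^'d \<Rightarrow> real) set" and ip :: "(real^'d \<Rightarrow> real) \<Rightarrow> (real^'d \<Rightarrow> real) \<Rightarrow> real"
    and Hl :: "(real^'d \<Rightarrow> real) set" and ipl :: "(real^'d \<Rightarrow> real) \<Rightarrow> (real^'d \<Rightarrow> real) \<Rightarrow> real"
  assumes "strictly_pd_kernel K \<Omega>"
    and "lam > 0"
    and "distinct xs" and "set xs \<subseteq> \<Omega>"
    and "is_rkhs K \<Omega> H ip"
    and "is_rkhs (delta_kernel K lam) \<Omega> Hl ipl"
  shows "(\<forall>x\<in>set xs. power_fun K H ip xs lam x \<le> sqrt lam)
       \<and> (\<forall>x\<in>\<Omega> - set xs. power_fun K H ip xs 0 x \<le> power_fun K H ip xs lam x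
                         \<and> power_fun K H ip xs lam x \<le> power_fun_delta K Hl ipl xs lam x)
       \<and> (\<Omega> - set xs \<noteq> {} \<longrightarrow>
            (SUP x\<in>\<Omega>. ereal (power_fun K H ip xs lam x))
              \<le> (SUP x\<in>\<Omega>. ereal (power_fun_delta K Hl ipl xs lam x)))"
proof -
  note spd = assms(1) and lam = assms(2) and d = assms(3) and sub = assms(4)
    and R = assms(5) and RL = assms(6)
  let ?n = "length xs"
  define KL where "KL = delta_kernel K lam"
  have xi: "xs!i \<in> \<Omega>" if "i < ?n" for i using sub that by auto
  have symK: "\<forall>a\<in>\<Omega>. \<forall>b\<in>\<Omega>. K a b = K b a" using spd unfolding strictly_pd_kernel_def by blast
  have Kpos: "K x x > 0" if x: "x \<in> \<Omega>" for x
  proof -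
    have "\<forall>Y c. finite Y \<and> Y \<subseteq> \<Omega> \<and> (\<exists>y\<in>Y. c y \<noteq> 0) \<longrightarrow>
        (\<Sum>y\<in>Y. \<Sum>z\<in>Y. c y * c z * K y z) > 0" using spd unfolding strictly_pd_kernel_def by (rule conjunct2)
    then have "(\<Sum>y\<in>{x}. \<Sum>z\<in>{x}. (\<lambda>_. 1::real) y * (\<lambda>_. 1::real) z * K y z) > 0"
      using x by (elim allE[of _ "{x}"] allE[of _ "\<lambda>_. 1::real"]) simp
    then show ?thesis by simp
  qed
  have symKL: "\<forall>a\<in>\<Omega>. \<forall>b\<in>\<Omega>. KL a b = KL b a" using symK unfolding KL_def delta_kernel_def by auto
  have drow: "(\<Sum>j<?n. delta_kernel K mu (xs!i) (xs!j) * u j) = (\<Sum>j<?n. K (xs!i) (xs!j) * u j) + mu * u i"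
    if i: "i < ?n" for mu u i
  proof -
    have "(\<Sum>j<?n. delta_kernel K mu (xs!i) (xs!j) * u j) = (\<Sum>j<?n. K (xs!i) (xs!j) * u j + (if i = j then mu * u i else 0))"
      unfolding delta_kernel_def using i d by (intro sum.cong refl) (auto simp: nth_eq_iff_index_eq algebra_simps)
    also have "\<dots> = (\<Sum>j<?n. K (xs!i) (xs!j) * u j) + mu * u i" using i by (simp add: sum.distrib)
    finally show ?thesis .
  qed
  have msym: "\<forall>i<?n. \<forall>j<?n. delta_kernel K mu (xs!i) (xs!j) = delta_kernel K mu (xs!j) (xs!i)" for mu
    using symK xi unfolding delta_kernel_def by auto
  have minj: "\<And>c. (\<forall>i<?n. (\<Sum>j<?n. delta_kernel K mu (xs!i) (xs!j) * c j) = 0) \<Longrightarrow> \<forall>j<?n. c j = 0"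
    if "mu \<ge> 0" for mu using delta_inj[OF spd d sub that] by blast
  have nzH: "\<exists>f\<in>H. f \<noteq> (\<lambda>_. 0)" if x: "x \<in> \<Omega>" for x
  proof -
    have "kfun K \<Omega> x x \<noteq> 0" using Kpos[OF x] x unfolding kfun_def by simp
    then show ?thesis using rk_kfun[OF R x] by (metis (mono_tags))
  qed
  have nzHl: "\<exists>f\<in>Hl. f \<noteq> (\<lambda>_. 0)" if x: "x \<in> \<Omega>" for x
  proof -
    have "kfun KL \<Omega> x x \<noteq> 0" using Kpos[OF x] x lam unfolding kfun_def KL_def delta_kernel_def by simp
    then show ?thesis using rk_kfun[OF RL[folded KL_def] x] by (metis (mono_tags))
  qed
  define uu where "uu mu x = kcoef (delta_kernel K mu) xs (\<lambda>y. K x y)" for mu x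
  define N where "N mu x = K x x - 2 * (\<Sum>i<?n. uu mu x i * K x (xs!i))
      + (\<Sum>i<?n. \<Sum>j<?n. uu mu x i * uu mu x j * K (xs!i) (xs!j))" for mu x
  define NQ where "NQ x = KL x x - 2 * (\<Sum>i<?n. kcoef KL xs (\<lambda>y. KL x y) i * KL x (xs!i))
      + (\<Sum>i<?n. \<Sum>j<?n. kcoef KL xs (\<lambda>y. KL x y) i * kcoef KL xs (\<lambda>y. KL x y) j * KL (xs!i) (xs!j))" for x
  have PF: "power_fun K H ip xs mu x = sqrt (N mu x) \<and> 0 \<le> N mu x" if "mu \<ge> 0" "x \<in> \<Omega>" for mu x
    using power_general[OF R symK sub that(2) msym minj[OF that(1)] nzH[OF that(2)]]
    unfolding power_fun_def reg_interp_def N_def uu_def by simp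
  have PQ: "power_fun_delta K Hl ipl xs lam x = sqrt (NQ x) \<and> 0 \<le> NQ x" if "x \<in> \<Omega>" for x
    using power_general[OF RL[folded KL_def] symKL sub that msym[unfolded KL_def[symmetric]] minj[OF less_imp_le[OF lam], folded KL_def] nzHl[OF that]]
    unfolding power_fun_delta_def delta_interp_def NQ_def KL_def by simp
  have uprop: "\<forall>i<?n. (\<Sum>j<?n. K (xs!i) (xs!j) * uu mu x j) + mu * uu mu x i = K x (xs!i)" if "mu \<ge> 0" for mu x
  proof (intro allI impI)
    fix i assume i: "i < ?n"
    have "\<forall>i<?n. (\<Sum>j<?n. delta_kernel K mu (xs!i) (xs!j) * uu mu x j) = K x (xs!i)"
      using kcoef_props[where m="delta_kernel K mu" and xs=xs and f="\<lambda>y. K x y", OF minj[OF that]]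
      unfolding uu_def by blast
    then show "(\<Sum>j<?n. K (xs!i) (xs!j) * uu mu x j) + mu * uu mu x i = K x (xs!i)"
      using drow[OF i, of mu "uu mu x"] i by simp
  qed
  have C1: "power_fun K H ip xs lam x \<le> sqrt lam" if x: "x \<in> set xs" for x
  proof -
    obtain p where p: "p < ?n" "x = xs!p" using x by (metis in_set_conv_nth)
    have "N lam x \<le> lam" unfolding N_def p(2)
      using scal_X[of ?n "\<lambda>i j. K (xs!i) (xs!j)" "uu lam (xs!p)" lam p] uprop[of lam "xs!p"] lam p(1) by simp
    then show ?thesis using PF[of lam x] lam x sub by auto
  qed
  have C2a: "N 0 x \<le> N lam x" if x: "x \<in> \<Omega>" for x
  proof -
    have "\<forall>i<?n. (\<Sum>j<?n. K (xs!i) (xs!j) * uu 0 x j) = K x (xs!i)" using uprop[of 0 x] by simp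
    moreover have "\<forall>i<?n. \<forall>j<?n. K (xs!i) (xs!j) = K (xs!j) (xs!i)" using symK xi by auto
    moreover have "\<And>c. (\<Sum>i<?n. \<Sum>j<?n. c i * c j * K (xs!i) (xs!j)) \<ge> 0" using psd_index[OF spd d sub] .
    ultimately show ?thesis unfolding N_def
      by (intro scal_out[of ?n "\<lambda>i j. K (xs!i) (xs!j)"]) auto
  qed
  have C2b: "NQ x = N lam x + lam + lam * (\<Sum>i<?n. uu lam x i ^ 2)" if x: "x \<in> \<Omega> - set xs" for x
  proof -
    have ne: "x \<noteq> xs!i" if "i < ?n" for i using x that by auto
    have KLx: "KL x (xs!i) = K x (xs!i)" if "i < ?n" for i
      using ne[OF that] unfolding KL_def delta_kernel_def by simp
    have w: "kcoef KL xs (\<lambda>y. KL x y) = uu lam x"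
      unfolding uu_def KL_def[symmetric] using KLx by (intro kcoef_cong) auto
    have "NQ x = (K x x + lam) - 2 * (\<Sum>i<?n. uu lam x i * K x (xs!i))
       + (\<Sum>i<?n. \<Sum>j<?n. uu lam x i * uu lam x j * KL (xs!i) (xs!j))"
    proof -
      have s1: "(\<Sum>i<?n. uu lam x i * KL x (xs!i)) = (\<Sum>i<?n. uu lam x i * K x (xs!i))"
        using KLx by (intro sum.cong refl) simp
      have s2: "KL x x = K x x + lam" unfolding KL_def delta_kernel_def by simp
      show ?thesis unfolding NQ_def w s1 s2 ..
    qed
    also have "(\<Sum>i<?n. \<Sum>j<?n. uu lam x i * uu lam x j * KL (xs!i) (xs!j))
      = (\<Sum>i<?n. \<Sum>j<?n. uu lam x i * uu lam x j * K (xs!i) (xs!j)) + lam * (\<Sum>i<?n. uu lam x i ^ 2)"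
      unfolding KL_def by (rule delta_sum[OF d])
    finally show ?thesis unfolding N_def by simp
  qed
  have C2: "power_fun K H ip xs 0 x \<le> power_fun K H ip xs lam x
         \<and> power_fun K H ip xs lam x \<le> power_fun_delta K Hl ipl xs lam x
         \<and> sqrt lam \<le> power_fun_delta K Hl ipl xs lam x" if x: "x \<in> \<Omega> - set xs" for x
  proof -
    have x': "x \<in> \<Omega>" using x by simp
    have s: "0 \<le> lam * (\<Sum>i<?n. uu lam x i ^ 2)" using lam by (simp add: sum_nonneg)
    have "N lam x \<le> NQ x" "lam \<le> NQ x" using C2b[OF x] s PF[of lam x] lam x' by auto
    then show ?thesis using PF[of 0 x] PF[of lam x] PQ[of x] C2a[OF x'] x' lam
      by (auto intro: real_sqrt_le_mono)
  qed
  have C3: "(SUP x\<in>\<Omega>. ereal (power_fun K H ip xs lam x))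
              \<le> (SUP x\<in>\<Omega>. ereal (power_fun_delta K Hl ipl xs lam x))" if ne: "\<Omega> - set xs \<noteq> {}"
  proof (rule SUP_least)
    obtain x0 where x0: "x0 \<in> \<Omega> - set xs" using ne by auto
    fix x assume x: "x \<in> \<Omega>"
    show "ereal (power_fun K H ip xs lam x) \<le> (SUP x\<in>\<Omega>. ereal (power_fun_delta K Hl ipl xs lam x))"
    proof (cases "x \<in> set xs")
      case True
      have "power_fun K H ip xs lam x \<le> power_fun_delta K Hl ipl xs lam x0"
        using C1[OF True] C2[OF x0] by linarith
      then have "ereal (power_fun K H ip xs lam x) \<le> ereal (power_fun_delta K Hl ipl xs lam x0)" by simp
      also have "\<dots> \<le> (SUP x\<in>\<Omega>. ereal (power_fun_delta K Hl ipl xs lam x))"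
        using x0 by (intro SUP_upper) auto
      finally show ?thesis .
    next
      case False
      then have "ereal (power_fun K H ip xs lam x) \<le> ereal (power_fun_delta K Hl ipl xs lam x)"
        using C2[of x] x by simp
      also have "\<dots> \<le> (SUP x\<in>\<Omega>. ereal (power_fun_delta K Hl ipl xs lam x))"
        using x by (intro SUP_upper) auto
      finally show ?thesis .
    qed
  qed
  show ?thesis using C1 C2 C3 by blast
qed


end
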